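(* Any two welded knot diagrams $K$ and $K'$ are diagonal-equivalent, i.e. one can be obtained from the other by a finite sequence of diagonal moves and classical and welded Reidemeister moves.
   Context: A welded knot diagram is a knot diagram that may have welded (virtual) crossings as well as classical crossings; welded knots are equivalence classes of welded knot diagrams under the three classical Reidemeister moves and the welded Reidemeister moves (the virtual Reidemeister moves together with the move allowing a strand passing over to slide past a welded crossing). A diagonal move (D-move) is a local move on a diagram defined as follows. Consider a disk in which the diagram consists of four arcs $a,b,c,d$ arranged in a "$\#$" pattern: $a$ and $c$ do not meet each other, $b$ and $d$ do not meet each other, and each of $a,c$ crosses each of $b,d$ exactly once in a classical crossing, giving four crossings labelled $1,2,3,4$ in cyclic order around the central square. The pairs $\{1,3\}$ and $\{2,4\}$ are the diagonal crossing pairs. A diagonal move changes the over/under information at both crossings of one diagonal pair and leaves the rest of the diagram unchanged; it is allowed for every choice of orientations of the arcs. *)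

theory Defs
  imports Main
begin

text \<open>
  Combinatorial model: a welded knot diagram, up to the virtual (detour) moves,
  is the same thing as a signed Gauss diagram on one circle; we encode it as a
  linear Gauss word read along the (oriented) knot starting at some point.
  A letter (x, ov, s) records that the knot passes through classical crossing
  labelled x, as the over-strand iff ov, and s is the sign (+1/-1) of x.
  Welded crossings are invisible in the Gauss word.
\<close>

type_synonym letter = "nat \<times> bool \<times> int"

definition unit_sgn :: "int \<Rightarrow> bool" where
  "unit_sgn e \<longleftrightarrow> e = 1 \<or> e = -1"

definition gauss_wf :: "letter list \<Rightarrow> bool" where
  "gauss_wf w \<longleftrightarrow>
     (\<forall>x ov s. (x, ov, s) \<in> set w \<longrightarrow>
        unit_sgn s \<and>
        length (filter (\<lambda>(y, p, r). y = x \<and> p = ov) w) = 1 \<and>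
        (x, \<not> ov, s) \<in> set w)"

fun interleave :: "'a list list \<Rightarrow> 'a list list \<Rightarrow> 'a list" where
  "interleave (b # bs) (r # rs) = b @ r @ interleave bs rs"
| "interleave _ _ = []"

text \<open>Local replacement: the blocks bs occur as pairwise disjoint consecutive
  segments of w (in some order pi along the word); w' is obtained by replacing
  each block bs!i by bs'!i, all other letters unchanged.  (Cyclicity of the
  word is handled by the separate rotation move.)\<close>
definition local_replace ::
  "letter list list \<Rightarrow> letter list list \<Rightarrow> letter list \<Rightarrow> letter list \<Rightarrow> bool" where
  "local_replace bs bs' w w' \<longleftrightarrow> length bs' = length bs \<and>
     (\<exists>\<pi> rs. distinct \<pi> \<and> set \<pi> = {..<length bs} \<and> length rs = length bs \<and>
        w = interleave (map (\<lambda>i. bs ! i) \<pi>) rs \<and>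
        w' = interleave (map (\<lambda>i. bs' ! i) \<pi>) rs)"

text \<open>Sign convention: the sign of a crossing is the sign of det(d_over, d_under),
  where d_over, d_under are the direction vectors of the over/under strand.\<close>

text \<open>Three straight strands L1 (horizontal,
  y = t, direction (h,0)), L2 (line y = x, direction e2(1,1)),
  L3 (line y = -x, direction e3(1,-1)); heights ht1, ht2, ht3 (larger = higher).
  Crossings: cy = L1 \<inter> L2, cz = L1 \<inter> L3, co = L2 \<inter> L3 (at origin).
  The parameter t = \<plusminus>1 says on which side of co the strand L1 lies;
  the R3 move changes t to -t.  Returned: the three two-letter blocks
  (the passages of L1, L2, L3 through the triangle).\<close>
definition r3_blocks ::
  "nat \<Rightarrow> nat \<Rightarrow> nat \<Rightarrow> nat \<Rightarrow> nat \<Rightarrow> nat \<Rightarrow> int \<Rightarrow> int \<Rightarrow> int \<Rightarrow> int \<Rightarrow> letter list list" where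
  "r3_blocks cy cz co ht1 ht2 ht3 h e2 e3 t =
    (let o12 = (ht1 > ht2); o13 = (ht1 > ht3); o23 = (ht2 > ht3);
         sY = (if o12 then h * e2 else - (h * e2));
         sZ = (if o13 then - (h * e3) else h * e3);
         sO = (if o23 then - (e2 * e3) else e2 * e3);
         Y1 = (cy, o12, sY); Z1 = (cz, o13, sZ);
         O2 = (co, o23, sO); Y2 = (cy, \<not> o12, sY);
         O3 = (co, \<not> o23, sO); Z3 = (cz, \<not> o13, sZ)
     in [if h * t = 1 then [Z1, Y1] else [Y1, Z1],
         if e2 * t = 1 then [O2, Y2] else [Y2, O2],
         if e3 * t = -1 then [O3, Z3] else [Z3, O3]])"

text \<open>Arcs a (y = 1, direction (ha,0)),
  c (y = -1, direction (hc,0)), b (x = -1, direction (0,vb)),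
  d (x = 1, direction (0,vd)).  Crossings in cyclic order around the central
  square: P1 = a\<inter>b, P2 = a\<inter>d, P3 = c\<inter>d, P4 = c\<inter>b with labels x1..x4;
  oi says that the horizontal arc is over at Pi.  Returned: the four two-letter
  blocks (the passages of a, b, c, d through the disk).\<close>
definition d_blocks ::
  "nat \<Rightarrow> nat \<Rightarrow> nat \<Rightarrow> nat \<Rightarrow> int \<Rightarrow> int \<Rightarrow> int \<Rightarrow> int \<Rightarrow>
   bool \<Rightarrow> bool \<Rightarrow> bool \<Rightarrow> bool \<Rightarrow> letter list list" where
  "d_blocks x1 x2 x3 x4 ha hc vb vd o1 o2 o3 o4 =
    (let s1 = (if o1 then ha * vb else - (ha * vb));
         s2 = (if o2 then ha * vd else - (ha * vd));
         s3 = (if o3 then hc * vd else - (hc * vd));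
         s4 = (if o4 then hc * vb else - (hc * vb));
         H1 = (x1, o1, s1); H2 = (x2, o2, s2); H3 = (x3, o3, s3); H4 = (x4, o4, s4);
         V1 = (x1, \<not> o1, s1); V2 = (x2, \<not> o2, s2); V3 = (x3, \<not> o3, s3); V4 = (x4, \<not> o4, s4)
     in [if ha = 1 then [H1, H2] else [H2, H1],
         if vb = 1 then [V4, V1] else [V1, V4],
         if hc = 1 then [H4, H3] else [H3, H4],
         if vd = 1 then [V3, V2] else [V2, V3]])"

definition rotate_move :: "letter list \<Rightarrow> letter list \<Rightarrow> bool" where
  "rotate_move w w' \<longleftrightarrow> w' = rotate1 w"

definition relabel_move :: "letter list \<Rightarrow> letter list \<Rightarrow> bool" where
  "relabel_move w w' \<longleftrightarrow> (\<exists>f. inj f \<and> w' = map (\<lambda>(x, ov, s). (f x, ov, s)) w)"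

definition R1_move :: "letter list \<Rightarrow> letter list \<Rightarrow> bool" where
  "R1_move w w' \<longleftrightarrow> (\<exists>x ov s. unit_sgn s \<and>
     local_replace [[(x, ov, s), (x, \<not> ov, s)]] [[]] w w')"

definition R2_move :: "letter list \<Rightarrow> letter list \<Rightarrow> bool" where
  "R2_move w w' \<longleftrightarrow> (\<exists>x y s B. x \<noteq> y \<and> unit_sgn s \<and>
     (B = [(x, False, s), (y, False, - s)] \<or> B = [(y, False, - s), (x, False, s)]) \<and>
     local_replace [[(x, True, s), (y, True, - s)], B] [[], []] w w')"

definition R3_move :: "letter list \<Rightarrow> letter list \<Rightarrow> bool" where
  "R3_move w w' \<longleftrightarrow> (\<exists>cy cz co ht1 ht2 ht3 h e2 e3 t.
     distinct [cy, cz, co] \<and> distinct [ht1, ht2, ht3] \<and>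
     unit_sgn h \<and> unit_sgn e2 \<and> unit_sgn e3 \<and> unit_sgn t \<and>
     local_replace (r3_blocks cy cz co ht1 ht2 ht3 h e2 e3 t)
                   (r3_blocks cy cz co ht1 ht2 ht3 h e2 e3 (- t)) w w')"

text \<open>Welded move (an over-passing strand slides past a welded crossing):
  in the Gauss word, two adjacent over-passages commute.\<close>
definition OC_move :: "letter list \<Rightarrow> letter list \<Rightarrow> bool" where
  "OC_move w w' \<longleftrightarrow> (\<exists>x y s r.
     local_replace [[(x, True, s), (y, True, r)]] [[(y, True, r), (x, True, s)]] w w')"

text \<open>Diagonal move: crossing changes at both crossings of a diagonal pair.\<close>
definition D_move :: "letter list \<Rightarrow> letter list \<Rightarrow> bool" where
  "D_move w w' \<longleftrightarrow> (\<exists>x1 x2 x3 x4 ha hc vb vd o1 o2 o3 o4 p1 p2 p3 p4.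
     distinct [x1, x2, x3, x4] \<and>
     unit_sgn ha \<and> unit_sgn hc \<and> unit_sgn vb \<and> unit_sgn vd \<and>
     ((p1, p2, p3, p4) = (\<not> o1, o2, \<not> o3, o4) \<or> (p1, p2, p3, p4) = (o1, \<not> o2, o3, \<not> o4)) \<and>
     local_replace (d_blocks x1 x2 x3 x4 ha hc vb vd o1 o2 o3 o4)
                   (d_blocks x1 x2 x3 x4 ha hc vb vd p1 p2 p3 p4) w w')"

definition diag_step :: "letter list \<Rightarrow> letter list \<Rightarrow> bool" where
  "diag_step w w' \<longleftrightarrow> gauss_wf w \<and> gauss_wf w' \<and>
     (rotate_move w w' \<or> relabel_move w w' \<or> R1_move w w' \<or> R2_move w w' \<or>
      R3_move w w' \<or> OC_move w w' \<or> D_move w w')"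

definition diag_equiv :: "letter list \<Rightarrow> letter list \<Rightarrow> bool" where
  "diag_equiv = (\<lambda>w w'. diag_step w w' \<or> diag_step w' w)\<^sup>*\<^sup>*"

end

theory Submission
  imports Defs "HOL-Library.Multiset"
begin

definition wfset :: "letter set \<Rightarrow> bool" where
  "wfset S \<longleftrightarrow> (\<forall>x ov s. (x,ov,s) \<in> S \<longrightarrow> unit_sgn s \<and> (x, \<not> ov, s) \<in> S \<and>
      (\<forall>s'. (x,ov,s') \<in> S \<longrightarrow> s' = s))"

lemma gwf_distinct: assumes H: "gauss_wf w" shows "distinct w"
  proof (rule ccontr)
    assume "\<not> distinct w"
    then obtain xs ys zs l where E: "w = xs@[l]@ys@[l]@zs" using not_distinct_decomp by blast
    obtain x ov s where l: "l = (x,ov,s)" by (cases l) auto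
    have "length (filter (\<lambda>(y, p, r). y = x \<and> p = ov) w) = 1"
      using H l E unfolding gauss_wf_def by auto
    then show False using E l by simp
  qed

lemma gwf_wfset: assumes H: "gauss_wf w" shows "wfset (set w)"
    unfolding wfset_def
  proof (intro allI impI conjI)
    fix x ov s assume m: "(x,ov,s) \<in> set w"
    show "unit_sgn s" using H m unfolding gauss_wf_def by auto
    show "(x, \<not> ov, s) \<in> set w" using H m unfolding gauss_wf_def by auto
  next
    fix x ov s s' assume m: "(x,ov,s) \<in> set w" and m': "(x, ov, s') \<in> set w"
    show "s' = s"
    proof (rule ccontr)
      assume ne: "s' \<noteq> s"
      let ?P = "\<lambda>(y::nat, p::bool, r::int). y = x \<and> p = ov"
      have "{(x,ov,s),(x,ov,s')} \<subseteq> {l. ?P l} \<inter> set w"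
        using m m' by auto
      moreover have "card {(x,ov,s),(x,ov,s')} = 2" using ne by simp
      ultimately have "card ({l. ?P l} \<inter> set w) \<ge> 2"
        by (metis List.finite_set card_mono finite_Int)
      moreover have "length (filter ?P w) = 1"
        using H m unfolding gauss_wf_def by auto
      ultimately show False using gwf_distinct[OF H] distinct_length_filter by (metis numeral_le_one_iff semiring_norm(69))
    qed
  qed

lemma gwf_back: assumes H: "distinct w" "wfset (set w)" shows "gauss_wf w"
  unfolding gauss_wf_def
  proof (intro allI impI conjI)
    fix x ov s assume m: "(x,ov,s) \<in> set w"
    show "unit_sgn s" "(x, \<not> ov, s) \<in> set w" using H m unfolding wfset_def by auto
    have "{l. (\<lambda>(y, p, r). y = x \<and> p = ov) l} \<inter> set w = {(x,ov,s)}"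
      using H m unfolding wfset_def by auto
    then show "length (filter (\<lambda>(y, p, r). y = x \<and> p = ov) w) = 1"
      using H(1) by (simp add: distinct_length_filter)
  qed

lemma gwf_char: "gauss_wf w \<longleftrightarrow> distinct w \<and> wfset (set w)"
  using gwf_distinct gwf_wfset gwf_back by blast

lemma wf_mset: "mset u = mset v \<Longrightarrow> gauss_wf u = gauss_wf v"
  by (metis gwf_char mset_eq_imp_distinct_iff mset_eq_setD)

definition labs :: "letter list \<Rightarrow> nat set" where "labs w = fst ` set w"

lemma wfset_Un: assumes "fst ` A \<inter> fst ` B = {}" shows "wfset (A \<union> B) \<longleftrightarrow> wfset A \<and> wfset B"
proof -
  have a: "(x,ov,s) \<in> A \<Longrightarrow> (x,ov',s') \<notin> B" for x ov ov' s s' using assms by force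
  have b: "(x,ov,s) \<in> B \<Longrightarrow> (x,ov',s') \<notin> A" for x ov ov' s s' using assms by force
  show ?thesis unfolding wfset_def using a b by blast
qed

lemma wf_append: assumes "labs u \<inter> labs v = {}" shows "gauss_wf (u @ v) \<longleftrightarrow> gauss_wf u \<and> gauss_wf v"
proof -
  have "set u \<inter> set v = {}" using assms unfolding labs_def by auto
  then show ?thesis using wfset_Un[of "set u" "set v"] assms unfolding gwf_char labs_def by auto
qed

lemma equiv_refl: "diag_equiv w w" by (simp add: diag_equiv_def)

lemma equiv_trans: "diag_equiv u v \<Longrightarrow> diag_equiv v w \<Longrightarrow> diag_equiv u w"
  unfolding diag_equiv_def by (rule rtranclp_trans)

lemma equiv_sym: "diag_equiv u v \<Longrightarrow> diag_equiv v u"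
proof -
  have s: "symp (\<lambda>w w'. diag_step w w' \<or> diag_step w' w)" unfolding symp_def by blast
  show "diag_equiv u v \<Longrightarrow> diag_equiv v u" unfolding diag_equiv_def
    by (rule sympD[OF symp_rtranclp[OF s]])
qed

lemma step_equiv: "diag_step u v \<Longrightarrow> diag_equiv u v"
  unfolding diag_equiv_def by (rule r_into_rtranclp) (rule disjI1)

lemma interleave_app:
  "length bs = length rs \<Longrightarrow> rs \<noteq> [] \<Longrightarrow>
   interleave bs rs @ t = interleave bs (butlast rs @ [last rs @ t])"
proof (induction rs arbitrary: bs)
  case Nil then show ?case by simp
next
  case (Cons r rs)
  then obtain b bs' where bs: "bs = b # bs'" by (cases bs) auto
  show ?case
  proof (cases "rs = []")
    case True then show ?thesis using Cons bs by simp
  next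
    case False
    then obtain r2 rs2 where "rs = r2 # rs2" by (cases rs) auto
    then show ?thesis using Cons bs False by simp
  qed
qed

definition lr_pre :: "letter list list \<Rightarrow> letter list list \<Rightarrow> letter list \<Rightarrow> letter list \<Rightarrow> bool" where
  "lr_pre bs bs' W1 W2 \<longleftrightarrow> length bs' = length bs \<and>
    (\<exists>p \<pi> rs. distinct \<pi> \<and> set \<pi> = {..<length bs} \<and> length rs = length bs \<and>
       W1 = p @ interleave (map (\<lambda>i. bs ! i) \<pi>) rs \<and> W2 = p @ interleave (map (\<lambda>i. bs' ! i) \<pi>) rs)"

lemma lr_pre_rot:
  assumes "lr_pre bs bs' W1 W2" "bs \<noteq> []"
  shows "\<exists>p X1 X2. W1 = p @ X1 \<and> W2 = p @ X2 \<and> local_replace bs bs' (X1 @ p) (X2 @ p)"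
proof -
  obtain p \<pi> rs where H: "length bs' = length bs" "distinct \<pi>" "set \<pi> = {..<length bs}" "length rs = length bs"
     "W1 = p @ interleave (map (\<lambda>i. bs ! i) \<pi>) rs" "W2 = p @ interleave (map (\<lambda>i. bs' ! i) \<pi>) rs"
    using assms(1) unfolding lr_pre_def by blast
  have lp: "length \<pi> = length bs" using H(2,3) by (metis distinct_card card_lessThan)
  have rne: "rs \<noteq> []" using H(4) assms(2) by auto
  let ?rs = "butlast rs @ [last rs @ p]"
  have "interleave (map (\<lambda>i. bs ! i) \<pi>) rs @ p = interleave (map (\<lambda>i. bs ! i) \<pi>) ?rs"
    by (rule interleave_app) (use lp H(4) rne in auto)
  moreover have "interleave (map (\<lambda>i. bs' ! i) \<pi>) rs @ p = interleave (map (\<lambda>i. bs' ! i) \<pi>) ?rs"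
    by (rule interleave_app) (use lp H(4) rne in auto)
  moreover have "length ?rs = length bs" using H(4) rne by (cases rs rule: rev_cases) auto
  ultimately have "local_replace bs bs' (interleave (map (\<lambda>i. bs ! i) \<pi>) rs @ p) (interleave (map (\<lambda>i. bs' ! i) \<pi>) rs @ p)"
    unfolding local_replace_def using H(1,2,3) by blast
  then show ?thesis using H(5,6) by blast
qed

lemma rot_equiv: "gauss_wf (p @ X) \<Longrightarrow> diag_equiv (p @ X) (X @ p)"
proof (induction p arbitrary: X)
  case Nil then show ?case by (simp add: equiv_refl)
next
  case (Cons a p)
  have w2: "gauss_wf (p @ X @ [a])" using Cons.prems wf_mset[of "p @ X @ [a]" "a # p @ X"] by simp
  have "diag_step (a # p @ X) (p @ X @ [a])"
    unfolding diag_step_def rotate_move_def using Cons.prems w2 by simp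
  moreover have "diag_equiv (p @ (X @ [a])) ((X @ [a]) @ p)" using Cons.IH[of "X @ [a]"] w2 by simp
  ultimately show ?case using step_equiv equiv_trans by fastforce
qed

lemma wf_rot: "gauss_wf (p @ X) \<Longrightarrow> gauss_wf (X @ p)"
  using wf_mset[of "p @ X" "X @ p"] by (simp add: union_commute)

lemma move_equiv:
  assumes "W1 = p @ X1" "W2 = p @ X2" "gauss_wf W1" "gauss_wf W2"
    "R1_move (X1 @ p) (X2 @ p) \<or> R2_move (X1 @ p) (X2 @ p) \<or> OC_move (X1 @ p) (X2 @ p) \<or> D_move (X1 @ p) (X2 @ p)"
  shows "diag_equiv W1 W2"
proof -
  have "gauss_wf (X1 @ p)" "gauss_wf (X2 @ p)" using assms wf_rot by auto
  then have "diag_step (X1 @ p) (X2 @ p)" unfolding diag_step_def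
    using assms(5) by blast
  then have "diag_equiv (X1 @ p) (X2 @ p)" by (rule step_equiv)
  moreover have "diag_equiv W1 (X1 @ p)" using rot_equiv assms by simp
  moreover have "diag_equiv (X2 @ p) W2" using rot_equiv assms equiv_sym by simp
  ultimately show ?thesis using equiv_trans by blast
qed

lemma R1_pre:
  assumes "lr_pre [[(x, ov, s), (x, \<not> ov, s)]] [[]] W1 W2" "unit_sgn s" "gauss_wf W1" "gauss_wf W2"
  shows "diag_equiv W1 W2"
proof -
  obtain p X1 X2 where "W1 = p @ X1" "W2 = p @ X2" "local_replace [[(x, ov, s), (x, \<not> ov, s)]] [[]] (X1 @ p) (X2 @ p)"
    using lr_pre_rot[OF assms(1)] by auto
  moreover have "R1_move (X1 @ p) (X2 @ p)" unfolding R1_move_def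
    using assms(2) calculation(3) by blast
  ultimately show ?thesis using move_equiv[of W1 p X1 W2 X2] assms(3,4) by blast
qed

lemma R2_pre:
  assumes "lr_pre [[(x, True, s), (y, True, - s)], B] [[], []] W1 W2" "x \<noteq> y" "unit_sgn s"
    "B = [(x, False, s), (y, False, - s)] \<or> B = [(y, False, - s), (x, False, s)]"
    "gauss_wf W1" "gauss_wf W2"
  shows "diag_equiv W1 W2"
proof -
  obtain p X1 X2 where "W1 = p @ X1" "W2 = p @ X2" "local_replace [[(x, True, s), (y, True, - s)], B] [[], []] (X1 @ p) (X2 @ p)"
    using lr_pre_rot[OF assms(1)] by auto
  moreover have "R2_move (X1 @ p) (X2 @ p)" unfolding R2_move_def
    apply (rule exI[of _ x], rule exI[of _ y], rule exI[of _ s], rule exI[of _ B])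
    using assms(2-4) calculation(3) by blast
  ultimately show ?thesis using move_equiv[of W1 p X1 W2 X2] assms(5,6) by blast
qed

lemma OC_pre:
  assumes "lr_pre [[(x, True, s), (y, True, r)]] [[(y, True, r), (x, True, s)]] W1 W2"
    "gauss_wf W1" "gauss_wf W2"
  shows "diag_equiv W1 W2"
proof -
  obtain p X1 X2 where "W1 = p @ X1" "W2 = p @ X2" "local_replace [[(x, True, s), (y, True, r)]] [[(y, True, r), (x, True, s)]] (X1 @ p) (X2 @ p)"
    using lr_pre_rot[OF assms(1)] by auto
  moreover have "OC_move (X1 @ p) (X2 @ p)" unfolding OC_move_def
    using calculation(3) by blast
  ultimately show ?thesis using move_equiv[of W1 p X1 W2 X2] assms(2,3) by blast
qed

lemma D_pre:
  assumes "lr_pre (d_blocks x1 x2 x3 x4 ha hc vb vd o1 o2 o3 o4)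
                   (d_blocks x1 x2 x3 x4 ha hc vb vd p1 p2 p3 p4) W1 W2"
    "distinct [x1, x2, x3, x4]"
    "unit_sgn ha" "unit_sgn hc" "unit_sgn vb" "unit_sgn vd"
    "(p1, p2, p3, p4) = (\<not> o1, o2, \<not> o3, o4) \<or> (p1, p2, p3, p4) = (o1, \<not> o2, o3, \<not> o4)"
    "gauss_wf W1" "gauss_wf W2"
  shows "diag_equiv W1 W2"
proof -
  have ne: "d_blocks x1 x2 x3 x4 ha hc vb vd o1 o2 o3 o4 \<noteq> []" by (simp add: d_blocks_def Let_def)
  obtain p X1 X2 where "W1 = p @ X1" "W2 = p @ X2" "local_replace (d_blocks x1 x2 x3 x4 ha hc vb vd o1 o2 o3 o4)
                   (d_blocks x1 x2 x3 x4 ha hc vb vd p1 p2 p3 p4) (X1 @ p) (X2 @ p)"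
    using lr_pre_rot[OF assms(1) ne] by auto
  moreover have "D_move (X1 @ p) (X2 @ p)" unfolding D_move_def
    apply (rule exI[of _ x1], rule exI[of _ x2], rule exI[of _ x3], rule exI[of _ x4])
    apply (rule exI[of _ ha], rule exI[of _ hc], rule exI[of _ vb], rule exI[of _ vd])
    apply (rule exI[of _ o1], rule exI[of _ o2], rule exI[of _ o3], rule exI[of _ o4])
    apply (rule exI[of _ p1], rule exI[of _ p2], rule exI[of _ p3], rule exI[of _ p4])
    using assms(2-7) calculation(3) by blast
  ultimately show ?thesis using move_equiv[of W1 p X1 W2 X2] assms(8,9) by blast
qed

lemma lr_concat_aux:
  assumes "distinct w" "distinct ls"
    "\<forall>i<length ls. F1 (ls!i) = C i @ Bs!i @ D i \<and> F2 (ls!i) = C i @ Bs'!i @ D i"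
    "\<forall>l\<in>set w. l \<notin> set ls \<longrightarrow> F1 l = F2 l"
  shows "\<exists>p \<pi> rs. distinct \<pi> \<and> set \<pi> = {i. i < length ls \<and> ls!i \<in> set w} \<and> length rs = length \<pi> \<and>
     concat (map F1 w) = p @ interleave (map (\<lambda>i. Bs!i) \<pi>) rs \<and>
     concat (map F2 w) = p @ interleave (map (\<lambda>i. Bs'!i) \<pi>) rs"
  using assms
proof (induction w)
  case Nil
  show ?case by (rule exI[of _ "[]"], rule exI[of _ "[]"], rule exI[of _ "[]"]) simp
next
  case (Cons a w)
  obtain p \<pi> rs where IH: "distinct \<pi>" "set \<pi> = {i. i < length ls \<and> ls!i \<in> set w}" "length rs = length \<pi>"
     "concat (map F1 w) = p @ interleave (map (\<lambda>i. Bs!i) \<pi>) rs"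
     "concat (map F2 w) = p @ interleave (map (\<lambda>i. Bs'!i) \<pi>) rs"
    using Cons by auto
  show ?case
  proof (cases "a \<in> set ls")
    case False
    then have "ls ! i \<noteq> a" if "i < length ls" for i using that by auto
    then have S: "{i. i < length ls \<and> ls!i \<in> set (a # w)} = {i. i < length ls \<and> ls!i \<in> set w}" by auto
    have "F1 a = F2 a" using Cons.prems(4) False by simp
    then show ?thesis
      apply (intro exI[of _ "F1 a @ p"] exI[of _ \<pi>] exI[of _ rs])
      using IH S by simp
  next
    case True
    then obtain i where i: "i < length ls" "ls ! i = a" by (metis in_set_conv_nth)
    have anw: "a \<notin> set w" using Cons.prems(1) by simp
    have ni: "i \<notin> set \<pi>" using IH(2) i anw by auto
    have S: "{j. j < length ls \<and> ls!j \<in> set (a # w)} = insert i {j. j < length ls \<and> ls!j \<in> set w}"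
      using i Cons.prems(2) nth_eq_iff_index_eq by fastforce
    have F: "F1 a = C i @ Bs!i @ D i" "F2 a = C i @ Bs'!i @ D i" using Cons.prems(3) i by auto
    show ?thesis
      apply (intro exI[of _ "C i"] exI[of _ "i # \<pi>"] exI[of _ "(D i @ p) # rs"])
      using IH S ni F by simp
  qed
qed

lemma lr_concat:
  assumes "distinct w" "distinct ls" "set ls \<subseteq> set w" "length Bs = length ls" "length Bs' = length ls"
    "\<forall>i<length ls. F1 (ls!i) = C i @ Bs!i @ D i \<and> F2 (ls!i) = C i @ Bs'!i @ D i"
    "\<forall>l\<in>set w. l \<notin> set ls \<longrightarrow> F1 l = F2 l"
  shows "lr_pre Bs Bs' (concat (map F1 w)) (concat (map F2 w))"
proof -
  obtain p \<pi> rs where IH: "distinct \<pi>" "set \<pi> = {i. i < length ls \<and> ls!i \<in> set w}" "length rs = length \<pi>"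
     "concat (map F1 w) = p @ interleave (map (\<lambda>i. Bs!i) \<pi>) rs"
     "concat (map F2 w) = p @ interleave (map (\<lambda>i. Bs'!i) \<pi>) rs"
    using lr_concat_aux[OF assms(1,2,6,7)] by blast
  have S: "set \<pi> = {..<length Bs}" using IH(2) assms(3,4) by auto
  have L: "length rs = length Bs" using IH(1,3) S by (metis distinct_card card_lessThan)
  show ?thesis unfolding lr_pre_def using IH(1,4,5) S L assms(4,5) by auto
qed

definition flS :: "nat set \<Rightarrow> letter \<Rightarrow> letter" where
  "flS Z l = (if fst l \<in> Z then (fst l, \<not> fst (snd l), - snd (snd l)) else l)"

lemma flS_inv: "flS Z (flS Z l) = l" by (cases l) (auto simp: flS_def)

lemma flS_inj: "inj (flS Z)" by (metis flS_inv injI)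

lemma flS_fst[simp]: "fst (flS Z l) = fst l" by (simp add: flS_def)

lemma wfset_flS: "wfset S \<Longrightarrow> wfset (flS Z ` S)"
  unfolding wfset_def
proof (intro allI impI conjI)
  fix x ov s assume H: "\<forall>x ov s. (x, ov, s) \<in> S \<longrightarrow> unit_sgn s \<and> (x, \<not> ov, s) \<in> S \<and> (\<forall>s'. (x, ov, s') \<in> S \<longrightarrow> s' = s)"
    and m: "(x, ov, s) \<in> flS Z ` S"
  obtain l where l: "l \<in> S" "(x,ov,s) = flS Z l" using m by auto
  show "unit_sgn s" using H l by (cases l) (auto simp: flS_def unit_sgn_def split: if_splits)
  show "(x, \<not> ov, s) \<in> flS Z ` S"
  proof (cases "x \<in> Z")
    case True
    then have "l = (x, \<not> ov, - s)" using l by (cases l) (auto simp: flS_def split: if_splits)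
    then have "(x, \<not> (\<not> ov), - s) \<in> S" using H l by blast
    then have "(x, ov, - s) \<in> S" by simp
    then show ?thesis using True by (auto simp: flS_def image_iff intro!: bexI[of _ "(x, ov, - s)"])
  next
    case False
    then have "l = (x, ov, s)" using l by (cases l) (auto simp: flS_def split: if_splits)
    then have "(x, \<not> ov, s) \<in> S" using H l by auto
    then show ?thesis using False by (auto simp: flS_def image_iff intro!: bexI[of _ "(x, \<not> ov, s)"])
  qed
  fix s' assume m': "(x, ov, s') \<in> flS Z ` S"
  obtain l' where l': "l' \<in> S" "(x,ov,s') = flS Z l'" using m' by auto
  show "s' = s"
  proof (cases "x \<in> Z")
    case True
    then have "l = (x, \<not> ov, - s)" "l' = (x, \<not> ov, - s')" using l l' by (cases l, cases l', auto simp: flS_def split: if_splits)+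
    then show ?thesis using H l l' by force
  next
    case False
    then have "l = (x, ov, s)" "l' = (x, ov, s')" using l l' by (cases l, cases l', auto simp: flS_def split: if_splits)+
    then show ?thesis using H l l' by force
  qed
qed

lemma wf_flS: "gauss_wf w \<Longrightarrow> gauss_wf (map (flS Z) w)"
  unfolding gwf_char using wfset_flS inj_on_subset[OF flS_inj subset_UNIV] by (simp add: distinct_map)

lemma labs_flS[simp]: "labs (map (flS Z) w) = labs w"
  unfolding labs_def by (simp add: image_image)

lemma mset_concat_ins:
  "mset (concat (map (\<lambda>l. h l # G l) w)) = mset (map h w) + mset (concat (map G w))"
  by (induction w) auto

lemma mset_concat_sum: "mset (concat (map G w)) = sum_list (map (\<lambda>l. mset (G l)) w)"
  by (induction w) auto

lemma mset_sel:
  assumes "distinct w" "distinct ks" "set ks \<subseteq> set w" "\<forall>l\<in>set w. l \<notin> set ks \<longrightarrow> G l = []"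
  shows "mset (concat (map G w)) = mset (concat (map G ks))"
proof -
  have "mset (concat (map G w)) = (\<Sum>l\<in>set w. mset (G l))"
    unfolding mset_concat_sum using assms(1) by (simp add: sum_list_distinct_conv_sum_set)
  also have "\<dots> = (\<Sum>l\<in>set ks. mset (G l))"
    by (rule sum.mono_neutral_right) (use assms(3,4) in auto)
  also have "\<dots> = mset (concat (map G ks))"
    unfolding mset_concat_sum using assms(2) by (simp add: sum_list_distinct_conv_sum_set)
  finally show ?thesis .
qed

lemma wf_ins:
  assumes "gauss_wf (map h w)" "gauss_wf Nw" "mset (concat (map G w)) = mset Nw"
    "labs (map h w) \<inter> labs Nw = {}"
  shows "gauss_wf (concat (map (\<lambda>l. h l # G l) w))"
proof -
  have "mset (concat (map (\<lambda>l. h l # G l) w)) = mset (map h w @ Nw)"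
    using mset_concat_ins[of h G w] assms(3) by simp
  then show ?thesis using wf_mset wf_append assms by metis
qed

lemma concat_single: "concat (map (\<lambda>l. [h l]) w) = map h w" by (induction w) auto

lemma all_lt2: "(\<forall>i<2. P i) \<longleftrightarrow> P (0::nat) \<and> P 1"
  by (auto simp: less_Suc_eq numeral_eq_Suc)

lemma all_lt2s: "(\<forall>i<Suc (Suc 0). P i) \<longleftrightarrow> P (0::nat) \<and> P 1"
  by (auto simp: less_Suc_eq)

lemma all_lt4s: "(\<forall>i<Suc (Suc (Suc (Suc 0))). P i) \<longleftrightarrow> P (0::nat) \<and> P 1 \<and> P 2 \<and> P 3"
  by (auto simp: less_Suc_eq numeral_eq_Suc)

lemma all_lt4: "(\<forall>i<4. P i) \<longleftrightarrow> P (0::nat) \<and> P 1 \<and> P 2 \<and> P 3"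
  by (auto simp: less_Suc_eq numeral_eq_Suc)

lemma wf_letters:
  assumes "gauss_wf w" "x \<in> labs w"
  obtains s where "(x, True, s) \<in> set w" "(x, False, s) \<in> set w" "unit_sgn s"
    "\<And>l. l \<in> set w \<Longrightarrow> fst l = x \<Longrightarrow> l = (x, True, s) \<or> l = (x, False, s)"
proof -
  obtain ov s where m: "(x, ov, s) \<in> set w" using assms(2) unfolding labs_def by force
  have W: "wfset (set w)" using assms(1) gwf_char by blast
  have m2: "(x, \<not> ov, s) \<in> set w" "unit_sgn s" using W m unfolding wfset_def by blast+
  have u: "l = (x, True, s) \<or> l = (x, False, s)" if lw: "l \<in> set w" and lx: "fst l = x" for l
  proof -
    obtain ov' s' where l: "l = (x, ov', s')" using lx by (cases l) auto
    have "s' = s"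
    proof (cases "ov' = ov")
      case True then show ?thesis using W m l lw unfolding wfset_def by blast
    next
      case False then have "ov' = (\<not> ov)" by blast
      then show ?thesis using W m2 l lw unfolding wfset_def by blast
    qed
    then show ?thesis using l by (cases ov') auto
  qed
  show thesis
  proof (cases ov)
    case True then show ?thesis using that m m2 u by auto
  next
    case False then show ?thesis using that m m2 u by auto
  qed
qed

lemma flip2:
  assumes wf: "gauss_wf w" and xy: "x \<noteq> y" and xin: "x \<in> labs w" and yin: "y \<in> labs w"
  shows "diag_equiv w (map (flS {x, y}) w)"
proof -
  obtain sx where sx: "(x, True, sx) \<in> set w" "(x, False, sx) \<in> set w" "unit_sgn sx"
    and ux: "\<And>l. l \<in> set w \<Longrightarrow> fst l = x \<Longrightarrow> l = (x, True, sx) \<or> l = (x, False, sx)"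
    using wf_letters[OF wf xin] by metis
  obtain sy where sy: "(y, True, sy) \<in> set w" "(y, False, sy) \<in> set w" "unit_sgn sy"
    and uy: "\<And>l. l \<in> set w \<Longrightarrow> fst l = y \<Longrightarrow> l = (y, True, sy) \<or> l = (y, False, sy)"
    using wf_letters[OF wf yin] by metis
  have dw: "distinct w" using wf gwf_char by blast
  define o1 where "o1 = (sx = -1)"
  define o3 where "o3 = (sy = -1)"
  have sxe: "sx = (if o1 then -1 else 1)" using sx(3) unfolding o1_def unit_sgn_def by auto
  have sye: "sy = (if o3 then -1 else 1)" using sy(3) unfolding o3_def unit_sgn_def by auto
  define H1 where "H1 = (x, o1, sx)"
  define V1 where "V1 = (x, \<not> o1, sx)"
  define H3 where "H3 = (y, o3, sy)"
  define V3 where "V3 = (y, \<not> o3, sy)"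
  have inw: "H1 \<in> set w" "V1 \<in> set w" "H3 \<in> set w" "V3 \<in> set w"
    unfolding H1_def V1_def H3_def V3_def using sx sy by (cases o1; cases o3; simp)+
  have dist: "H1 \<noteq> V1" "H1 \<noteq> H3" "H1 \<noteq> V3" "V1 \<noteq> H3" "V1 \<noteq> V3" "H3 \<noteq> V3"
    unfolding H1_def V1_def H3_def V3_def using xy by auto
  have other: "l \<in> set w \<Longrightarrow> l \<notin> {H1, V1, H3, V3} \<Longrightarrow> fst l \<notin> {x, y}" for l
  proof -
    assume a: "l \<in> set w" "l \<notin> {H1, V1, H3, V3}"
    show "fst l \<notin> {x, y}"
    proof
      assume "fst l \<in> {x, y}"
      then show False using ux[OF a(1)] uy[OF a(1)] a(2) unfolding H1_def V1_def H3_def V3_def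
        by (cases o1; cases o3; auto)
    qed
  qed
  define f where "f = flS {x, y}"
  have fo: "l \<in> set w \<Longrightarrow> l \<notin> {H1, V1, H3, V3} \<Longrightarrow> f l = l" for l
    using other unfolding f_def flS_def by auto
  define N where "N = Suc (sum_list (map fst w))"
  have lt: "fst l < N" if "l \<in> set w" for l
    using member_le_sum_list[of "fst l" "map fst w"] that unfolding N_def by auto
  have xN: "x < N" "y < N" using lt inw unfolding H1_def H3_def by force+
  define H2 where "H2 = (N, True, 1::int)"
  define V2 where "V2 = (N, False, 1::int)"
  define H2' where "H2' = (N+1, True, -1::int)"
  define V2' where "V2' = (N+1, False, -1::int)"
  define H4 where "H4 = (N+2, True, 1::int)"
  define V4 where "V4 = (N+2, False, 1::int)"
  define H4' where "H4' = (N+3, True, -1::int)"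
  define V4' where "V4' = (N+3, False, -1::int)"
  define Gf where "Gf l = (if l = H1 then [H2, H2'] else if l = V1 then [V4, V4'] else
     if l = H3 then [H4, H4'] else if l = V3 then [V2, V2'] else [])" for l
  define G4 where "G4 l = (if l = V1 then [V4, V4'] else if l = H3 then [H4, H4'] else [])" for l
  have Gfv: "Gf H1 = [H2, H2']" "Gf V1 = [V4, V4']" "Gf H3 = [H4, H4']" "Gf V3 = [V2, V2']"
    unfolding Gf_def using dist by auto
  have G4v: "G4 H1 = []" "G4 V1 = [V4, V4']" "G4 H3 = [H4, H4']" "G4 V3 = []"
    unfolding G4_def using dist by auto
  have Gfo: "l \<notin> {H1, V1, H3, V3} \<Longrightarrow> Gf l = []" for l unfolding Gf_def by auto
  have G4o: "l \<notin> {V1, H3} \<Longrightarrow> G4 l = []" for l unfolding G4_def by auto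
  have GfG4: "l \<notin> {H1, V3} \<Longrightarrow> Gf l = G4 l" for l unfolding Gf_def G4_def by auto
  define w1 where "w1 = concat (map (\<lambda>l. l # G4 l) w)"
  define w2 where "w2 = concat (map (\<lambda>l. l # Gf l) w)"
  define w3 where "w3 = concat (map (\<lambda>l. f l # Gf l) w)"
  define w4 where "w4 = concat (map (\<lambda>l. f l # G4 l) w)"
  have w0: "w = concat (map (\<lambda>l. [l]) w)" using concat_single[of "\<lambda>l. l" w] by simp
  have w5: "map f w = concat (map (\<lambda>l. [f l]) w)" using concat_single[of f w] by simp
  have labsN: "labs w \<inter> labs Nw = {}" if "\<forall>l\<in>set Nw. fst l \<ge> N" for Nw
    using lt that unfolding labs_def by force
  have wff: "gauss_wf (map f w)" unfolding f_def using wf_flS[OF wf] .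
  have labsf: "labs (map f w) = labs w" unfolding f_def by simp
  have wfp: "gauss_wf [a, b]" if "a = (n, True, s)" "b = (n, False, s)" "unit_sgn s" for a b n s
    unfolding gwf_char wfset_def using that by auto
  have wfNf: "gauss_wf [H2, V2, H2', V2', H4, V4, H4', V4']"
    unfolding gwf_char wfset_def H2_def V2_def H2'_def V2'_def H4_def V4_def H4'_def V4'_def unit_sgn_def
    by auto
  have wfN4: "gauss_wf [H4, V4, H4', V4']"
    unfolding gwf_char wfset_def H4_def V4_def H4'_def V4'_def unit_sgn_def
    by auto
  have msf: "mset (concat (map Gf w)) = mset [H2, V2, H2', V2', H4, V4, H4', V4']"
  proof -
    have "mset (concat (map Gf w)) = mset (concat (map Gf [H1, V1, H3, V3]))"
      by (rule mset_sel) (use dw dist inw Gfo in auto)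
    then show ?thesis using Gfv by simp
  qed
  have ms4: "mset (concat (map G4 w)) = mset [H4, V4, H4', V4']"
  proof -
    have "mset (concat (map G4 w)) = mset (concat (map G4 [V1, H3]))"
      by (rule mset_sel) (use dw dist inw G4o in auto)
    then show ?thesis using G4v by simp
  qed
  have geN: "\<forall>l\<in>set [H2, V2, H2', V2', H4, V4, H4', V4']. fst l \<ge> N"
    unfolding H2_def V2_def H2'_def V2'_def H4_def V4_def H4'_def V4'_def by auto
  have geN4: "\<forall>l\<in>set [H4, V4, H4', V4']. fst l \<ge> N"
    unfolding H4_def V4_def H4'_def V4'_def by auto
  have wf1: "gauss_wf w1" unfolding w1_def
    using wf_ins[of "\<lambda>l. l" w "[H4, V4, H4', V4']" G4] wf wfN4 ms4 labsN[OF geN4] by simp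
  have wf2: "gauss_wf w2" unfolding w2_def
    using wf_ins[of "\<lambda>l. l" w "[H2, V2, H2', V2', H4, V4, H4', V4']" Gf] wf wfNf msf labsN[OF geN] by simp
  have wf3: "gauss_wf w3" unfolding w3_def
    using wf_ins[of f w "[H2, V2, H2', V2', H4, V4, H4', V4']" Gf] wff wfNf msf labsN[OF geN] labsf by simp
  have wf4: "gauss_wf w4" unfolding w4_def
    using wf_ins[of f w "[H4, V4, H4', V4']" G4] wff wfN4 ms4 labsN[OF geN4] labsf by simp
  have e1: "diag_equiv w1 w"
  proof -
    have "lr_pre [[H4, H4'], [V4, V4']] [[], []] (concat (map (\<lambda>l. l # G4 l) w)) (concat (map (\<lambda>l. [l]) w))"
      apply (rule lr_concat[where ls = "[H3, V1]" and C = "\<lambda>i. [[H3, V1] ! i]" and D = "\<lambda>i. []"])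
      subgoal by (rule dw)
      subgoal using dist by simp
      subgoal using inw by simp
      subgoal by simp
      subgoal by simp
      subgoal by (simp add: all_lt2 all_lt2s all_lt4 all_lt4s G4v)
      subgoal using G4o by simp
      done
    then have "lr_pre [[(N+2, True, 1), (N+3, True, - 1)], [(N+2, False, 1), (N+3, False, - 1)]] [[], []] w1 w"
      using w0[symmetric] unfolding w1_def H4_def H4'_def V4_def V4'_def by simp
    then show ?thesis by (rule R2_pre) (use wf1 wf in \<open>auto simp: unit_sgn_def\<close>)
  qed
  have e2: "diag_equiv w2 w1"
  proof -
    have "lr_pre [[H2, H2'], [V2, V2']] [[], []] (concat (map (\<lambda>l. l # Gf l) w)) (concat (map (\<lambda>l. l # G4 l) w))"
      apply (rule lr_concat[where ls = "[H1, V3]" and C = "\<lambda>i. [[H1, V3] ! i]" and D = "\<lambda>i. []"])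
      subgoal by (rule dw)
      subgoal using dist by simp
      subgoal using inw by simp
      subgoal by simp
      subgoal by simp
      subgoal by (simp add: all_lt2 all_lt2s all_lt4 all_lt4s Gfv G4v)
      subgoal using GfG4 by simp
      done
    then have "lr_pre [[(N, True, 1), (N+1, True, - 1)], [(N, False, 1), (N+1, False, - 1)]] [[], []] w2 w1"
      unfolding w1_def w2_def H2_def H2'_def V2_def V2'_def by simp
    then show ?thesis by (rule R2_pre) (use wf1 wf2 in \<open>auto simp: unit_sgn_def\<close>)
  qed
  have e4: "diag_equiv w3 w4"
  proof -
    have "lr_pre [[H2, H2'], [V2, V2']] [[], []] (concat (map (\<lambda>l. f l # Gf l) w)) (concat (map (\<lambda>l. f l # G4 l) w))"
      apply (rule lr_concat[where ls = "[H1, V3]" and C = "\<lambda>i. [f ([H1, V3] ! i)]" and D = "\<lambda>i. []"])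
      subgoal by (rule dw)
      subgoal using dist by simp
      subgoal using inw by simp
      subgoal by simp
      subgoal by simp
      subgoal by (simp add: all_lt2 all_lt2s all_lt4 all_lt4s Gfv G4v)
      subgoal using GfG4 by simp
      done
    then have "lr_pre [[(N, True, 1), (N+1, True, - 1)], [(N, False, 1), (N+1, False, - 1)]] [[], []] w3 w4"
      unfolding w3_def w4_def H2_def H2'_def V2_def V2'_def by simp
    then show ?thesis by (rule R2_pre) (use wf3 wf4 in \<open>auto simp: unit_sgn_def\<close>)
  qed
  have e5: "diag_equiv w4 (map f w)"
  proof -
    have "lr_pre [[H4, H4'], [V4, V4']] [[], []] (concat (map (\<lambda>l. f l # G4 l) w)) (concat (map (\<lambda>l. [f l]) w))"
      apply (rule lr_concat[where ls = "[H3, V1]" and C = "\<lambda>i. [f ([H3, V1] ! i)]" and D = "\<lambda>i. []"])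
      subgoal by (rule dw)
      subgoal using dist by simp
      subgoal using inw by simp
      subgoal by simp
      subgoal by simp
      subgoal by (simp add: all_lt2 all_lt2s all_lt4 all_lt4s G4v)
      subgoal using G4o by simp
      done
    then have "lr_pre [[(N+2, True, 1), (N+3, True, - 1)], [(N+2, False, 1), (N+3, False, - 1)]] [[], []] w4 (map f w)"
      using w5[symmetric] unfolding w4_def H4_def H4'_def V4_def V4'_def by simp
    then show ?thesis by (rule R2_pre) (use wf4 wff in \<open>auto simp: unit_sgn_def\<close>)
  qed
  have e3: "diag_equiv w2 w3"
  proof -
    have "lr_pre [[H1, H2], [V1, V4], [H3, H4], [V3, V2]] [[f H1, H2], [f V1, V4], [f H3, H4], [f V3, V2]]
       (concat (map (\<lambda>l. l # Gf l) w)) (concat (map (\<lambda>l. f l # Gf l) w))"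
      apply (rule lr_concat[where ls = "[H1, V1, H3, V3]" and C = "\<lambda>i. []" and D = "\<lambda>i. [[H2'], [V4'], [H4'], [V2']] ! i"])
      subgoal by (rule dw)
      subgoal using dist by simp
      subgoal using inw by simp
      subgoal by simp
      subgoal by simp
      subgoal by (simp add: all_lt2 all_lt2s all_lt4 all_lt4s Gfv)
      subgoal using fo by simp
      done
    moreover have "d_blocks x N y (N+2) 1 (-1) (-1) 1 o1 True o3 True = [[H1, H2], [V1, V4], [H3, H4], [V3, V2]]"
      unfolding d_blocks_def Let_def H1_def H2_def V1_def V4_def H3_def H4_def V3_def V2_def
      using sxe sye by (cases o1; cases o3; simp)
    moreover have "d_blocks x N y (N+2) 1 (-1) (-1) 1 (\<not> o1) True (\<not> o3) True = [[f H1, H2], [f V1, V4], [f H3, H4], [f V3, V2]]"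
      unfolding d_blocks_def Let_def H1_def H2_def V1_def V4_def H3_def H4_def V3_def V2_def f_def flS_def
      using sxe sye by (cases o1; cases o3; simp)
    ultimately have "lr_pre (d_blocks x N y (N+2) 1 (-1) (-1) 1 o1 True o3 True)
        (d_blocks x N y (N+2) 1 (-1) (-1) 1 (\<not> o1) True (\<not> o3) True) w2 w3"
      unfolding w2_def w3_def by simp
    then show ?thesis by (rule D_pre) (use wf2 wf3 xy xN in \<open>auto simp: unit_sgn_def\<close>)
  qed
  have "diag_equiv w w1" using e1 equiv_sym by blast
  moreover have "diag_equiv w1 w2" using e2 equiv_sym by blast
  ultimately show ?thesis using e3 e4 e5 equiv_trans unfolding f_def by blast
qed

lemma flS_comp: "x \<notin> Z \<Longrightarrow> y \<notin> Z \<Longrightarrow> flS {x, y} (flS Z l) = flS (insert x (insert y Z)) l"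
  by (cases l) (auto simp: flS_def)

lemma labs_sub_flS: "labs w = labs (map (flS Z) w)" by simp

lemma flip_even:
  assumes "finite Z" "even (card Z)" "Z \<subseteq> labs w" "gauss_wf w"
  shows "diag_equiv w (map (flS Z) w)"
  using assms
proof (induction "card Z" arbitrary: Z rule: less_induct)
  case less
  show ?case
  proof (cases "Z = {}")
    case True
    then have "map (flS Z) w = w" by (induction w) (auto simp: flS_def)
    then show ?thesis using equiv_refl by simp
  next
    case False
    then obtain x where x: "x \<in> Z" by blast
    have "card Z \<noteq> 1" using less.prems(2) by auto
    have "Z - {x} \<noteq> {}"
    proof
      assume "Z - {x} = {}"
      then have "Z = {x}" using x by auto
      then show False using \<open>card Z \<noteq> 1\<close> by simp
    qed
    then obtain y where y: "y \<in> Z" "y \<noteq> x" by blast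
    define Z' where "Z' = Z - {x, y}"
    have sub: "{x, y} \<subseteq> Z" using x y by auto
    have c2: "card {x, y} = 2" using y by simp
    have "card Z' = card Z - 2" unfolding Z'_def using card_Diff_subset[OF _ sub] c2 less.prems(1)
      by (simp add: finite_subset)
    moreover have "card Z \<ge> 2" using card_mono[OF less.prems(1) sub] c2 by simp
    ultimately have cZ: "card Z = Suc (Suc (card Z'))" by simp
    have IH: "diag_equiv w (map (flS Z') w)"
      by (rule less.hyps) (use cZ less.prems in \<open>auto simp: Z'_def\<close>)
    have wf': "gauss_wf (map (flS Z') w)" using wf_flS less.prems(4) by blast
    have "diag_equiv (map (flS Z') w) (map (flS {x, y}) (map (flS Z') w))"
      by (rule flip2) (use wf' x y less.prems(3) in auto)
    moreover have "map (flS {x, y}) (map (flS Z') w) = map (flS Z) w"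
    proof -
      have "insert x (insert y Z') = Z" unfolding Z'_def using x y by auto
      then show ?thesis using flS_comp[of x Z' y] unfolding Z'_def by auto
    qed
    ultimately show ?thesis using IH equiv_trans by metis
  qed
qed

lemma slide:
  assumes "\<forall>l\<in>set m. fst (snd l)" "fst (snd a)" "gauss_wf (u @ a # m @ v)"
  shows "diag_equiv (u @ a # m @ v) (u @ m @ a # v)"
  using assms
proof (induction m arbitrary: u)
  case Nil then show ?case using equiv_refl by simp
next
  case (Cons c m)
  obtain xa sa where a: "a = (xa, True, sa)" using Cons.prems(2) by (cases a) auto
  obtain xc sc where c: "c = (xc, True, sc)" using Cons.prems(1) by (cases c) auto
  have wf2: "gauss_wf ((u @ [c]) @ a # m @ v)"
    using Cons.prems(3) wf_mset[of "(u @ [c]) @ a # m @ v" "u @ a # (c # m) @ v"] by simp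
  have "lr_pre [[(xa, True, sa), (xc, True, sc)]] [[(xc, True, sc), (xa, True, sa)]]
        (u @ a # (c # m) @ v) ((u @ [c]) @ a # m @ v)"
    unfolding lr_pre_def
    apply (rule conjI, simp)
    apply (rule exI[of _ u], rule exI[of _ "[0]"], rule exI[of _ "[m @ v]"])
    using a c by (simp add: lessThan_Suc)
  then have "diag_equiv (u @ a # (c # m) @ v) ((u @ [c]) @ a # m @ v)"
    by (rule OC_pre) (use Cons.prems(3) wf2 in auto)
  moreover have "diag_equiv ((u @ [c]) @ a # m @ v) ((u @ [c]) @ m @ a # v)"
    by (rule Cons.IH) (use Cons.prems wf2 in auto)
  ultimately show ?case using equiv_trans by simp
qed

lemma r1:
  assumes "gauss_wf (u @ [A, B] @ v)" "A = (x, ov, s)" "B = (x, \<not> ov, s)"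
  shows "diag_equiv (u @ [A, B] @ v) (u @ v)"
proof -
  let ?w = "u @ [A, B] @ v"
  have xin: "x \<in> labs ?w" using assms unfolding labs_def by force
  obtain s0 where u: "\<And>l. l \<in> set ?w \<Longrightarrow> fst l = x \<Longrightarrow> l = (x, True, s0) \<or> l = (x, False, s0)"
    and us: "unit_sgn s0" and s0: "(x, True, s0) \<in> set ?w"
    using wf_letters[OF assms(1) xin] by metis
  have s: "s = s0" using u[of A] assms(2) by auto
  have d: "distinct ?w" using assms(1) gwf_char by blast
  have "x \<notin> labs (u @ v)"
  proof
    assume "x \<in> labs (u @ v)"
    then obtain l where l: "l \<in> set (u @ v)" "fst l = x" unfolding labs_def by auto
    then have "l = A \<or> l = B" using u[of l] assms(2,3) s by (cases ov) auto
    then show False using d l(1) by auto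
  qed
  then have disj: "labs (u @ v) \<inter> labs [A, B] = {}" using assms(2,3) unfolding labs_def by auto
  have "gauss_wf ((u @ v) @ [A, B])" using assms(1) wf_mset[of "(u @ v) @ [A, B]" ?w] by simp
  then have wf2: "gauss_wf (u @ v)" using wf_append[OF disj] by blast
  have "lr_pre [[(x, ov, s), (x, \<not> ov, s)]] [[]] ?w (u @ v)"
    unfolding lr_pre_def
    apply (rule conjI, simp)
    apply (rule exI[of _ u], rule exI[of _ "[0]"], rule exI[of _ "[v]"])
    using assms(2,3) by (simp add: lessThan_Suc)
  then show ?thesis by (rule R1_pre) (use us s assms(1) wf2 in auto)
qed

lemma minpair:
  assumes "w = p @ [A] @ m @ [B] @ q" "fst A = fst B"
  shows "\<exists>p A m B q. w = p @ [A] @ m @ [B] @ q \<and> fst A = fst B \<and> distinct (map fst m) \<and> fst A \<notin> fst ` set m"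
  using assms
proof (induction "length m" arbitrary: p A m B q rule: less_induct)
  case less
  show ?case
  proof (cases "fst A \<in> fst ` set m")
    case True
    then obtain C where C: "C \<in> set m" "fst C = fst A" by auto
    then obtain m1 m2 where m: "m = m1 @ C # m2" by (meson split_list)
    show ?thesis
      by (rule less.hyps[of m1 p A C "m2 @ [B] @ q"]) (use m C less.prems in auto)
  next
    case False
    show ?thesis
    proof (cases "distinct (map fst m)")
      case True then show ?thesis using False less.prems by blast
    next
      case nd: False
      then obtain xs ys zs z where e: "map fst m = xs @ [z] @ ys @ [z] @ zs" using not_distinct_decomp by blast
      then obtain m1 r1 where "m = m1 @ r1" "map fst m1 = xs" "map fst r1 = [z] @ ys @ [z] @ zs"
        by (auto simp: map_eq_append_conv)
      moreover then obtain C r2 where "r1 = C # r2" "fst C = z" "map fst r2 = ys @ [z] @ zs"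
        by (auto simp: map_eq_Cons_conv)
      moreover then obtain m2 r3 where "r2 = m2 @ r3" "map fst m2 = ys" "map fst r3 = [z] @ zs"
        by (auto simp: map_eq_append_conv)
      moreover then obtain D m3 where "r3 = D # m3" "fst D = z"
        by (auto simp: map_eq_Cons_conv)
      ultimately have m: "m = m1 @ [C] @ m2 @ [D] @ m3" "fst C = fst D" by auto
      show ?thesis
        by (rule less.hyps[of m2 "p @ [A] @ m1" C D "m3 @ [B] @ q"]) (use m less.prems in auto)
    qed
  qed
qed

lemma reduce:
  assumes wf: "gauss_wf w" and ne: "w \<noteq> []"
  shows "\<exists>w'. gauss_wf w' \<and> length w' < length w \<and> diag_equiv w w'"
proof -
  obtain A0 r where w: "w = A0 # r" using ne by (cases w) auto
  obtain x0 ov0 s0 where A0: "A0 = (x0, ov0, s0)" by (cases A0) auto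
  have "(x0, \<not> ov0, s0) \<in> set w" using wf w A0 unfolding gauss_wf_def by auto
  then have "(x0, \<not> ov0, s0) \<in> set r" using w A0 by auto
  then obtain m0 q0 where "r = m0 @ (x0, \<not> ov0, s0) # q0" by (meson split_list)
  then have "w = [] @ [A0] @ m0 @ [(x0, \<not> ov0, s0)] @ q0" using w by simp
  then obtain p A m B q where E: "w = p @ [A] @ m @ [B] @ q" and AB: "fst A = fst B"
    and dm: "distinct (map fst m)" and Am: "fst A \<notin> fst ` set m"
    using minpair[of w "[]" A0 m0 "(x0, \<not> ov0, s0)" q0] A0 by auto
  define x where "x = fst A"
  have dw: "distinct w" using wf gwf_char by blast
  define Z0 where "Z0 = fst ` {l \<in> set m. \<not> fst (snd l)}"
  define Z where "Z = (if even (card Z0) then Z0 else insert x Z0)"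
  have fZ0: "finite Z0" unfolding Z0_def by simp
  have xZ0: "x \<notin> Z0" unfolding Z0_def x_def using Am by auto
  have fZ: "finite Z" unfolding Z_def using fZ0 by simp
  have eZ: "even (card Z)" unfolding Z_def using fZ0 xZ0 by auto
  have Zsub: "Z \<subseteq> labs w" unfolding Z_def Z0_def labs_def x_def using E by auto
  define f where "f = flS Z"
  have e1: "diag_equiv w (map f w)" unfolding f_def by (rule flip_even[OF fZ eZ Zsub wf])
  have wf1: "gauss_wf (map f w)" unfolding f_def using wf_flS[OF wf] .
  have E1: "map f w = map f p @ [f A] @ map f m @ [f B] @ map f q" using E by simp
  have mO: "\<forall>l\<in>set (map f m). fst (snd l)"
  proof
    fix l' assume "l' \<in> set (map f m)"
    then obtain l where l: "l \<in> set m" "l' = f l" by auto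
    show "fst (snd l')"
    proof (cases "fst (snd l)")
      case False
      then have "fst l \<in> Z" using l(1) unfolding Z_def Z0_def by auto
      then show ?thesis using l False unfolding f_def flS_def by auto
    next
      case True
      have "fst l \<notin> Z0"
      proof
        assume "fst l \<in> Z0"
        then obtain l2 where l2: "l2 \<in> set m" "\<not> fst (snd l2)" "fst l2 = fst l" unfolding Z0_def by auto
        have "l2 = l" using dm l2(1,3) l(1) by (metis inj_on_contraD distinct_map)
        then show False using l2(2) True by simp
      qed
      moreover have "fst l \<noteq> x" using Am l(1) unfolding x_def by (metis image_eqI)
      ultimately have "fst l \<notin> Z" unfolding Z_def by auto
      then show ?thesis using l True unfolding f_def flS_def by auto
    qed
  qed
  have inA0: "f A \<in> set (map f w)" using E1 by simp
  have xin: "x \<in> labs (map f w)" using inA0 unfolding labs_def x_def f_def by (metis flS_fst image_eqI)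
  obtain s where u: "\<And>l. l \<in> set (map f w) \<Longrightarrow> fst l = x \<Longrightarrow> l = (x, True, s) \<or> l = (x, False, s)"
    using wf_letters[OF wf1 xin] by metis
  have fA: "fst (f A) = x" "fst (f B) = x" unfolding f_def x_def using AB by auto
  have inA: "f A \<in> set (map f w)" "f B \<in> set (map f w)" using E1 by auto
  have dw1: "distinct (map f w)" using wf1 gwf_char by blast
  have nAB: "f A \<noteq> f B" using dw1 E1 by auto
  let ?p = "map f p" and ?m = "map f m" and ?q = "map f q"
  have e2: "diag_equiv (map f w) (?p @ ?m @ ?q)"
  proof (cases "f A = (x, True, s)")
    case True
    then have fB: "f B = (x, False, s)" using u[OF inA(2) fA(2)] nAB by auto
    have "diag_equiv (?p @ f A # ?m @ (f B # ?q)) (?p @ ?m @ f A # f B # ?q)"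
      by (rule slide) (use mO True wf1 E1 in auto)
    moreover have wfs: "gauss_wf ((?p @ ?m) @ [f A, f B] @ ?q)"
      using wf1 E1 wf_mset[of "(?p @ ?m) @ [f A, f B] @ ?q" "map f w"] by (simp add: ac_simps)
    moreover have "diag_equiv ((?p @ ?m) @ [f A, f B] @ ?q) ((?p @ ?m) @ ?q)"
      by (rule r1[where x = x and ov = True and s = s]) (use wfs True fB in auto)
    ultimately show ?thesis using E1 equiv_trans by simp
  next
    case False
    then have fA': "f A = (x, False, s)" using u[OF inA(1) fA(1)] by auto
    then have fB: "f B = (x, True, s)" using u[OF inA(2) fA(2)] nAB by auto
    have wf3: "gauss_wf ((?p @ [f A]) @ f B # ?m @ ?q)"
      using wf1 E1 wf_mset[of "(?p @ [f A]) @ f B # ?m @ ?q" "map f w"] by simp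
    have "diag_equiv ((?p @ [f A]) @ f B # ?m @ ?q) ((?p @ [f A]) @ ?m @ f B # ?q)"
      by (rule slide) (use mO fB wf3 in auto)
    then have "diag_equiv (map f w) (?p @ [f A, f B] @ ?m @ ?q)" using E1 equiv_sym by simp
    moreover have "diag_equiv (?p @ [f A, f B] @ (?m @ ?q)) (?p @ (?m @ ?q))"
      by (rule r1[where x = x and ov = False and s = s]) (use wf3 fA' fB in auto)
    ultimately show ?thesis using equiv_trans by simp
  qed
  have wf2: "gauss_wf (?p @ ?m @ ?q)"
  proof -
    have "x \<notin> labs (?p @ ?m @ ?q)"
    proof
      assume "x \<in> labs (?p @ ?m @ ?q)"
      then obtain l where l: "l \<in> set (?p @ ?m @ ?q)" "fst l = x" unfolding labs_def by (metis imageE)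
      then have "l \<in> set (map f w)" using E1 by auto
      then have "l = f A \<or> l = f B" using u[OF _ l(2)] u[OF inA(1) fA(1)] u[OF inA(2) fA(2)] nAB by metis
      then show False using dw1 E1 l(1) by auto
    qed
    then have disj: "labs (?p @ ?m @ ?q) \<inter> labs [f A, f B] = {}" using fA unfolding labs_def by auto
    have "gauss_wf ((?p @ ?m @ ?q) @ [f A, f B])" using wf1 E1 wf_mset[of "(?p @ ?m @ ?q) @ [f A, f B]" "map f w"] by simp
    then show ?thesis using wf_append[OF disj] by blast
  qed
  have "length (?p @ ?m @ ?q) < length w" using E by simp
  then show ?thesis using wf2 e1 e2 equiv_trans by blast
qed

lemma to_empty: "gauss_wf w \<Longrightarrow> diag_equiv w []"
proof (induction "length w" arbitrary: w rule: less_induct)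
  case less
  show ?case
  proof (cases "w = []")
    case True then show ?thesis using equiv_refl by simp
  next
    case False
    then obtain w' where "gauss_wf w'" "length w' < length w" "diag_equiv w w'"
      using reduce less.prems by blast
    then show ?thesis using less.hyps equiv_trans by blast
  qed
qed

theorem mainTheorem5:
  fixes K K' :: "letter list"
  assumes "gauss_wf K" and "gauss_wf K'"
  shows "diag_equiv K K'"
  using to_empty[OF assms(1)] to_empty[OF assms(2)] equiv_sym equiv_trans by blast

end
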